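(* Let $N$ be an indecomposable $n$-dimensional two-step nilpotent Lie algebra over $\mathbb{C}$, and let its center have dimension $p$. Then \[ 1 \le p \le n + \tfrac{1}{2} - \sqrt{2n + \tfrac{1}{4}}. \]
   Context: A two-step nilpotent Lie algebra is a non-abelian Lie algebra $N$ with $[N,[N,N]]=0$. A Lie algebra is decomposable if it is a direct sum of two nonzero ideals, and indecomposable otherwise. *)

theory Defs
  imports "HOL-Analysis.Analysis"
begin

text \<open>An n-dimensional complex Lie algebra is modelled (up to isomorphism) as the
  vector space complex^'n (n = CARD('n)) with a bracket operation br.\<close>

definition lie_algebra :: "(complex^'n \<Rightarrow> complex^'n \<Rightarrow> complex^'n) \<Rightarrow> bool" where
  "lie_algebra br \<longleftrightarrow>
     (\<forall>a b x y z. br (a *s x + b *s y) z = a *s br x z + b *s br y z) \<and>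
     (\<forall>a b x y z. br z (a *s x + b *s y) = a *s br z x + b *s br z y) \<and>
     (\<forall>x. br x x = 0) \<and>
     (\<forall>x y z. br x (br y z) + br y (br z x) + br z (br x y) = 0)"

definition two_step_nilpotent :: "(complex^'n \<Rightarrow> complex^'n \<Rightarrow> complex^'n) \<Rightarrow> bool" where
  "two_step_nilpotent br \<longleftrightarrow> lie_algebra br \<and>
     (\<exists>x y. br x y \<noteq> 0) \<and> (\<forall>x y z. br x (br y z) = 0)"

definition lie_center :: "(complex^'n \<Rightarrow> complex^'n \<Rightarrow> complex^'n) \<Rightarrow> (complex^'n) set" where
  "lie_center br = {z. \<forall>x. br z x = 0}"

definition lie_ideal :: "(complex^'n \<Rightarrow> complex^'n \<Rightarrow> complex^'n) \<Rightarrow> (complex^'n) set \<Rightarrow> bool" where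
  "lie_ideal br I \<longleftrightarrow> vec.subspace I \<and> (\<forall>x y. y \<in> I \<longrightarrow> br x y \<in> I)"

definition lie_decomposable :: "(complex^'n \<Rightarrow> complex^'n \<Rightarrow> complex^'n) \<Rightarrow> bool" where
  "lie_decomposable br \<longleftrightarrow> (\<exists>I J. lie_ideal br I \<and> lie_ideal br J \<and>
     I \<noteq> {0} \<and> J \<noteq> {0} \<and> I \<inter> J = {0} \<and> vec.span (I \<union> J) = UNIV)"

end

theory Submission
  imports Defs
begin

locale brl =
  fixes br :: "complex^'n \<Rightarrow> complex^'n \<Rightarrow> complex^'n"
  assumes L: "lie_algebra br"
begin

lemma addl: "br (x + y) z = br x z + br y z"
  using L unfolding lie_algebra_def by (metis scaleR_one vector_smult_lid)

lemma addr: "br z (x + y) = br z x + br z y"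
  using L unfolding lie_algebra_def by (metis vector_smult_lid)

lemma scl: "br (c *s x) z = c *s br x z"
  using L unfolding lie_algebra_def
  by (metis add.right_neutral vector_smult_lzero)

lemma scr: "br z (c *s x) = c *s br z x"
  using L unfolding lie_algebra_def
  by (metis add.right_neutral vector_smult_lzero)

lemma zl[simp]: "br 0 z = 0"
  by (metis scl vector_smult_lzero)

lemma zr[simp]: "br z 0 = 0"
  by (metis scr vector_smult_lzero)

lemma alt[simp]: "br x x = 0"
  using L unfolding lie_algebra_def by blast

lemma anti: "br x y = - br y x"
proof -
  have "br (x + y) (x + y) = (br x x + br y x) + (br x y + br y y)" by (simp only: addl addr)
  then have "br x y + br y x = 0" by (simp add: add.commute)
  then show ?thesis by (metis eq_neg_iff_add_eq_0)
qed

lemma bil: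
  assumes x: "x \<in> vec.span A" and y: "y \<in> vec.span B"
  shows "br x y \<in> vec.span {br a b | a b. a \<in> A \<and> b \<in> B}"
proof -
  let ?T = "vec.span {br a b | a b. a \<in> A \<and> b \<in> B}"
  have 1: "br a y \<in> ?T" if a: "a \<in> A" for a
    using y
  proof (induct rule: vec.span_induct)
    case base
    show ?case unfolding vec.subspace_def
      by (auto simp: addr scr intro: vec.span_add vec.span_scale vec.span_zero)
  next
    case (step b)
    then show ?case using a by (auto intro!: vec.span_base)
  qed
  show ?thesis using x
  proof (induct rule: vec.span_induct)
    case base
    show ?case unfolding vec.subspace_def
      by (auto simp: addl scl intro: vec.span_add vec.span_scale vec.span_zero)
  next
    case (step a)
    then show ?case using 1 by auto
  qed
qed

end

lemma card_pairs: "2 * card {(i,j::nat). i<j \<and> j<q} = q*(q-1)"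
proof (induct q)
  case 0
  then show ?case by simp
next
  case (Suc q)
  have e: "{(i,j::nat). i<j \<and> j<Suc q} = {(i,j::nat). i<j \<and> j<q} \<union> (\<lambda>i. (i,q)) ` {..<q}"
    by auto
  have f: "finite {(i,j::nat). i<j \<and> j<q}"
    by (rule finite_subset[of _ "{..<q} \<times> {..<q}"]) auto
  have "card {(i,j::nat). i<j \<and> j<Suc q} = card {(i,j::nat). i<j \<and> j<q} + q"
    unfolding e
    by (subst card_Un_disjoint) (auto simp: f card_image inj_on_def)
  then show ?case using Suc by (cases q) (auto simp: algebra_simps)
qed

theorem proposition2:
  fixes br :: "complex^'n \<Rightarrow> complex^'n \<Rightarrow> complex^'n"
  assumes "two_step_nilpotent br"
    and "\<not> lie_decomposable br"
  shows "1 \<le> vec.dim (lie_center br) \<and>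
         real (vec.dim (lie_center br)) \<le> real CARD('n) + 1/2 - sqrt (2 * real CARD('n) + 1/4)"

proof -
  have L: "lie_algebra br" and nz: "\<exists>x y. br x y \<noteq> 0" and ts: "\<And>x y z. br x (br y z) = 0"
    using assms(1) unfolding two_step_nilpotent_def by auto
  interpret brl br using L by unfold_locales
  define Z where "Z = lie_center br"
  define D where "D = vec.span {br x y | x y. True}"
  have subZ: "vec.subspace Z" unfolding Z_def lie_center_def vec.subspace_def
    by (simp add: addl scl)
  have DZ: "D \<subseteq> Z" unfolding D_def
  proof (rule vec.span_minimal[OF _ subZ])
    show "{br x y | x y. True} \<subseteq> Z"
    proof clarify
      fix x y
      have "br (br x y) w = 0" for w using ts[of w x y] anti[of "br x y" w] by simp
      then show "br x y \<in> Z" unfolding Z_def lie_center_def by simp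
    qed
  qed
  have Dnz: "D \<noteq> {0}"
  proof -
    obtain x y where xy: "br x y \<noteq> 0" using nz by blast
    have "br x y \<in> D" unfolding D_def by (rule vec.span_base) blast
    then show ?thesis using xy by blast
  qed
  have ZD: "Z \<subseteq> D"
  proof (rule ccontr)
    assume "\<not> Z \<subseteq> D"
    then obtain z where zZ: "z \<in> Z" and zD: "z \<notin> D" by auto
    obtain B0 where B0: "B0 \<subseteq> D" "vec.independent B0" "D \<subseteq> vec.span B0"
      using vec.basis_exists[of D] by metis
    have spB0: "vec.span B0 = D"
    proof
      show "vec.span B0 \<subseteq> D" using vec.span_mono[OF B0(1)] unfolding D_def vec.span_span .
    qed (rule B0(3))
    have zB0: "z \<notin> vec.span B0" using zD spB0 by simp
    have indz: "vec.independent (insert z B0)" using vec.independent_insertI[OF zB0 B0(2)] .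
    define E where "E = vec.extend_basis (insert z B0)"
    have E1: "insert z B0 \<subseteq> E" "vec.independent E" "vec.span E = UNIV"
      using vec.extend_basis_superset[OF indz] vec.independent_extend_basis[OF indz] vec.span_extend_basis[OF indz]
      unfolding E_def by auto
    define I where "I = vec.span {z}"
    define J where "J = vec.span (E - {z})"
    have zE: "z \<in> E" using E1 by auto
    have znJ: "z \<notin> J" using E1(2) zE unfolding J_def vec.dependent_def by auto
    have z0: "z \<noteq> 0" using zD unfolding D_def using vec.span_zero by auto
    have zn: "z \<notin> B0" using zB0 vec.span_base by blast
    have "B0 \<subseteq> E - {z}" using E1(1) zn by blast
    then have DJ: "D \<subseteq> J" unfolding J_def spB0[symmetric] by (rule vec.span_mono)
    have "lie_ideal br I" unfolding lie_ideal_def I_def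
    proof (intro conjI allI impI)
      fix x y assume "y \<in> vec.span {z}"
      then obtain c where "y = c *s z" by (auto simp: vec.span_singleton)
      moreover have "br z x = 0" using zZ unfolding Z_def lie_center_def by simp
      then have "br x z = 0" using anti[of x z] by simp
      ultimately have "br x y = 0" by (simp add: scr)
      then show "br x y \<in> vec.span {z}" by (simp add: vec.span_zero)
    qed simp
    moreover have "lie_ideal br J" unfolding lie_ideal_def J_def
    proof (intro conjI allI impI)
      fix x y
      have "br x y \<in> D" unfolding D_def by (rule vec.span_base) blast
      then show "br x y \<in> vec.span (E - {z})" using DJ unfolding J_def by blast
    qed simp
    moreover have "I \<noteq> {0}" unfolding I_def using z0 vec.span_base[of z "{z}"] by auto
    moreover have "J \<noteq> {0}"
    proof -
      show ?thesis using DJ Dnz vec.span_zero[of "{br x y | x y. True}"] unfolding D_def by blast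
    qed
    moreover have "I \<inter> J = {0}"
    proof -
      have "x = 0" if xI: "x \<in> I" and xJ: "x \<in> J" for x
      proof -
        obtain c where c: "x = c *s z" using xI unfolding I_def by (auto simp: vec.span_singleton)
        show ?thesis
        proof (rule ccontr)
          assume "x \<noteq> 0"
          then have "c \<noteq> 0" using c by auto
          have "inverse c *s x \<in> J" using xJ unfolding J_def by (rule vec.span_scale)
          then have "z \<in> J" using \<open>c \<noteq> 0\<close> c by simp
          then show False using znJ by simp
        qed
      qed
      moreover have "0 \<in> I" "0 \<in> J" unfolding I_def J_def by (auto intro: vec.span_zero)
      ultimately show ?thesis by auto
    qed
    moreover have "vec.span (I \<union> J) = UNIV"
    proof -
      have "E \<subseteq> I \<union> J" unfolding I_def J_def
        by (auto intro: vec.span_base)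
      then have "vec.span E \<subseteq> vec.span (I \<union> J)" by (rule vec.span_mono)
      then show ?thesis using E1(3) by auto
    qed
    ultimately show False using assms(2) unfolding lie_decomposable_def by blast
  qed
  have DeqZ: "D = Z" using DZ ZD by auto
  define p where "p = vec.dim Z"
  define n where "n = CARD('n)"
  obtain C where C: "C \<subseteq> Z" "vec.independent C" "Z \<subseteq> vec.span C" "card C = p"
    unfolding p_def using vec.basis_exists by blast
  have spC: "vec.span C = Z" using C subZ by (metis vec.span_minimal subset_antisym)
  define E where "E = vec.extend_basis C"
  have E1: "C \<subseteq> E" "vec.independent E" "vec.span E = UNIV"
    using vec.extend_basis_superset[OF C(2)] vec.independent_extend_basis[OF C(2)] vec.span_extend_basis[OF C(2)]
    unfolding E_def by auto
  have finE: "finite E" using E1(2) by (rule vec.finiteI_independent)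
  have cardE: "card E = n" unfolding n_def
    using vec.dim_eq_card[of E UNIV] E1 vec_dim_card by (metis vec.span_UNIV)
  define W where "W = E - C"
  define q where "q = n - p"
  have cardW: "card W = q" unfolding W_def q_def using finE E1(1) C(4) cardE
    by (simp add: card_Diff_subset finite_subset)
  have pn: "p \<le> n" using C(4) cardE E1(1) finE by (metis card_mono)
  obtain e where e: "bij_betw e {..<q} W"
    using cardW finE W_def ex_bij_betw_nat_finite[of W] by (metis finite_Diff lessThan_atLeast0)
  define P where "P = {(i,j::nat). i<j \<and> j<q}"
  define S where "S = (\<lambda>(i,j). br (e i) (e j)) ` P"
  have finP: "finite P" unfolding P_def
    by (rule finite_subset[of _ "{..<q} \<times> {..<q}"]) auto
  have WW: "{br a b | a b. a \<in> W \<and> b \<in> W} \<subseteq> vec.span S"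
  proof clarify
    fix a b assume a: "a \<in> W" and b: "b \<in> W"
    obtain i where i: "i < q" "a = e i" using a e by (metis bij_betw_iff_bijections lessThan_iff)
    obtain j where j: "j < q" "b = e j" using b e by (metis bij_betw_iff_bijections lessThan_iff)
    consider "i < j" | "i = j" | "j < i" by linarith
    then show "br a b \<in> vec.span S"
    proof cases
      case 1
      then have "br a b \<in> S" unfolding S_def P_def using i j by force
      then show ?thesis by (rule vec.span_base)
    next
      case 2
      then show ?thesis using i j by (simp add: vec.span_zero)
    next
      case 3
      then have "br b a \<in> S" unfolding S_def P_def using i j by force
      then have "- br b a \<in> vec.span S" by (intro vec.span_neg vec.span_base)
      then show ?thesis by (metis anti)
    qed
  qed
  have allin: "br x y \<in> vec.span S" for x y
  proof -
    have "x \<in> vec.span (W \<union> C)" "y \<in> vec.span (W \<union> C)"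
    proof -
      have "W \<union> C = E" using E1(1) unfolding W_def by blast
      then show "x \<in> vec.span (W \<union> C)" "y \<in> vec.span (W \<union> C)" using E1(3) by auto
    qed
    then obtain x1 x2 y1 y2 where xs: "x = x1 + x2" "x1 \<in> vec.span W" "x2 \<in> Z"
      and ys: "y = y1 + y2" "y1 \<in> vec.span W" "y2 \<in> Z"
      unfolding vec.span_Un spC by blast
    have "br x2 t = 0" for t using xs(3) unfolding Z_def lie_center_def by auto
    moreover have "br t y2 = 0" for t using ys(3) anti[of t y2] unfolding Z_def lie_center_def
      by simp
    ultimately have "br x y = br x1 y1" unfolding xs ys by (simp add: addl addr)
    moreover have "br x1 y1 \<in> vec.span {br a b | a b. a \<in> W \<and> b \<in> W}"
      by (rule bil[OF xs(2) ys(2)])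
    moreover have "vec.span {br a b | a b. a \<in> W \<and> b \<in> W} \<subseteq> vec.span S"
      using vec.span_mono[OF WW] unfolding vec.span_span .
    ultimately show ?thesis by auto
  qed
  have "D \<subseteq> vec.span S" unfolding D_def
    by (rule vec.span_minimal) (use allin in auto)
  moreover have "finite S" unfolding S_def using finP by (rule finite_imageI)
  ultimately have "vec.dim D \<le> card S" by (rule vec.dim_le_card)
  then have "p \<le> card S" unfolding p_def DeqZ .
  also have "card S \<le> card P" unfolding S_def using finP by (rule card_image_le)
  finally have pq: "2 * p \<le> q * (q - 1)" using card_pairs[of q] unfolding P_def by linarith
  have p1: "1 \<le> p"
  proof -
    have "0 \<in> D" unfolding D_def by (rule vec.span_zero)
    then have "\<not> Z \<subseteq> {0}" using Dnz DeqZ by blast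
    then have "vec.dim Z \<noteq> 0" using vec.dim_eq_0[of Z] by blast
    then show ?thesis unfolding p_def by linarith
  qed
  have nq: "n = p + q" using pn q_def by simp
  have r: "2 * real p \<le> real q * real q - real q"
  proof -
    have "real (2*p) \<le> real (q * (q - 1))" using pq by linarith
    then show ?thesis by (cases q) (auto simp: algebra_simps)
  qed
  have "sqrt (2 * real n + 1/4) \<le> sqrt ((real q + 1/2)^2)"
    using r nq by (intro real_sqrt_le_mono) (simp add: power2_eq_square algebra_simps)
  also have "\<dots> = real q + 1/2" by simp
  finally have "real p \<le> real n + 1/2 - sqrt (2 * real n + 1/4)" using nq by simp
  then show ?thesis using p1 unfolding p_def Z_def n_def by simp
qed

end
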